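(* Let $A_0\in\mathfrak{gl}_n(\mathbb C)$ and let $A_t$ be the solution of $\dot A_t=A_t[A_t,A_t^*]$ with initial value $A_0$ (it exists for all $t\ge0$). Let $\omega(A_0)$ be the set of all limits $\lim_{k\to\infty}A_{t_k}$ over sequences $t_k\to\infty$ along which the limit exists. Then $\omega(A_0)=\{0\}$ if and only if $A_0$ is nilpotent.
   Context: $A^*$ is the conjugate transpose and $[X,Y]=XY-YX$. *)

theory Defs
  imports "HOL-Analysis.Analysis"
begin

definition conj_transpose :: "complex^'n^'n \<Rightarrow> complex^'n^'n" where
  "conj_transpose A = (\<chi> i j. cnj (A $ j $ i))"

definition commutator :: "complex^'n^'n \<Rightarrow> complex^'n^'n \<Rightarrow> complex^'n^'n" where
  "commutator X Y = X ** Y - Y ** X"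

definition mat_pow :: "complex^'n^'n \<Rightarrow> nat \<Rightarrow> complex^'n^'n" where
  "mat_pow A k = ((\<lambda>B. A ** B) ^^ k) (mat 1)"

definition nilpotent_matrix :: "complex^'n^'n \<Rightarrow> bool" where
  "nilpotent_matrix A \<longleftrightarrow> (\<exists>k. mat_pow A k = 0)"

definition omega_limit :: "(real \<Rightarrow> complex^'n^'n) \<Rightarrow> (complex^'n^'n) set" where
  "omega_limit A = {L. \<exists>t :: nat \<Rightarrow> real. filterlim t at_top sequentially \<and>
                        (\<lambda>k. A (t k)) \<longlonglongrightarrow> L}"

end

theory Submission
  imports Defs "Jordan_Normal_Form.Jordan_Normal_Form_Existence"
begin

definition trm :: "'a::comm_ring_1 mat \<Rightarrow> 'a" where
  "trm A = sum_list (diag_mat A)"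

lemma trm_alt: "trm A = (\<Sum>i<dim_row A. A $$ (i,i))"
  unfolding trm_def diag_mat_def
  by (simp add: sum_list_sum_nth atLeast0LessThan)

lemma trm_mult_comm:
  assumes "A \<in> carrier_mat n m" "B \<in> carrier_mat m n"
  shows "trm (A * B) = trm (B * A)"
proof -
  have "trm (A * B) = (\<Sum>i<n. \<Sum>k<m. A $$ (i,k) * B $$ (k,i))"
    using assms by (simp add: trm_alt scalar_prod_def atLeast0LessThan)
  also have "\<dots> = (\<Sum>k<m. \<Sum>i<n. B $$ (k,i) * A $$ (i,k))"
    by (subst sum.swap) (simp add: mult.commute)
  also have "\<dots> = trm (B * A)"
    using assms by (simp add: trm_alt scalar_prod_def atLeast0LessThan)
  finally show ?thesis .
qed

lemma diag_mat_diag_block_mat: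
  "(\<forall>A\<in>set As. dim_row A = dim_col A) \<Longrightarrow> diag_mat (diag_block_mat As) = concat (map diag_mat As)"
proof (induct As)
  case Nil
  then show ?case by (simp add: diag_mat_def)
next
  case (Cons A As)
  let ?B = "diag_block_mat As"
  have sqA: "dim_row A = dim_col A" using Cons.prems by simp
  have all: "\<forall>A\<in>set As. dim_row A = dim_col A" using Cons.prems by simp
  have e: "map dim_row As = map dim_col As" by (rule map_cong[OF refl]) (use all in blast)
  have sq: "dim_row ?B = dim_col ?B"
    unfolding dim_diag_block_mat e ..
  have c1: "A \<in> carrier_mat (dim_row A) (dim_row A)" using sqA unfolding carrier_mat_def by simp
  have c2: "?B \<in> carrier_mat (dim_row ?B) (dim_row ?B)" using sq unfolding carrier_mat_def by simp
  have "diag_mat (diag_block_mat (A # As)) = diag_mat A @ diag_mat ?B"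
    unfolding diag_block_mat.simps Let_def
    by (rule diag_four_block_mat[OF c1 c2])
  then show ?case using Cons.hyps[OF all] by simp
qed

lemma diag_jordan_pow:
  "diag_mat (jordan_matrix n_as ^\<^sub>m k) = concat (map (\<lambda>(m,a). replicate m ((a::'a::field) ^ k)) n_as)"
proof -
  have "diag_mat (jordan_matrix n_as ^\<^sub>m k) =
     concat (map diag_mat (map (\<lambda>(n,a). (jordan_block n a) ^\<^sub>m k) n_as))"
    unfolding jordan_matrix_pow
  proof (rule diag_mat_diag_block_mat, intro ballI)
    fix B assume "B \<in> set (map (\<lambda>(n,a). (jordan_block n a) ^\<^sub>m k) n_as)"
    then obtain m a where "B = jordan_block m a ^\<^sub>m k" by auto
    then show "dim_row B = dim_col B" by simp
  qed
  also have "\<dots> = concat (map (\<lambda>(m,a). replicate m (a ^ k)) n_as)"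
  proof (induct n_as)
    case (Cons x xs)
    obtain m a where x: "x = (m,a)" by fastforce
    show ?case using Cons by (simp only: x list.map concat.simps case_prod_conv diag_jordan_block_pow)
  qed simp
  finally show ?thesis .
qed

lemma sum_list_concat_replicate:
  "sum_list (concat (map (\<lambda>(m,a). replicate m (f a)) xs)) = sum_list (map (\<lambda>(m,a). of_nat m * (f a :: 'a::comm_ring_1)) xs)"
  by (induct xs) (auto simp: sum_list_replicate)

lemma trm_jordan_pow:
  "trm (jordan_matrix n_as ^\<^sub>m k) = sum_list (map (\<lambda>(m,a). of_nat m * (a::'a::field) ^ k) n_as)"
  unfolding trm_def diag_jordan_pow by (rule sum_list_concat_replicate)


lemma sum_list_poly_expand:
  "sum_list (map (\<lambda>(m,a). of_nat m * (\<Sum>i\<le>d. c i * a^i)) xs) =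
   (\<Sum>i\<le>d. c i * sum_list (map (\<lambda>(m,a). of_nat m * (a::complex)^i) xs))"
proof (induct xs)
  case Nil then show ?case by simp
next
  case (Cons x xs)
  obtain m a where x: "x = (m,a)" by fastforce
  show ?case using Cons
    by (simp add: x sum_distrib_left sum.distrib algebra_simps)
qed

lemma sum_list_select:
  assumes "\<forall>(m,a)\<in>set ys. f a = (if a = \<mu> then c else 0)"
  shows "sum_list (map (\<lambda>(m,a). of_nat m * (f a::complex)) ys) =
    of_nat (sum_list (map (\<lambda>(m,a). if a = \<mu> then m else 0) ys)) * c"
  using assms
proof (induct ys)
  case Nil then show ?case by simp
next
  case (Cons x xs)
  obtain m a where x: "x = (m,a)" by fastforce
  show ?case using Cons
    by (auto simp: x algebra_simps)
qed

lemma power_sums_zero: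
  fixes xs :: "(nat \<times> complex) list"
  assumes pos: "\<forall>(m,a)\<in>set xs. m > 0"
    and z: "\<forall>k\<ge>1. sum_list (map (\<lambda>(m,a). of_nat m * a^k) xs) = 0"
  shows "\<forall>(m,a)\<in>set xs. a = 0"
proof (rule ccontr)
  assume "\<not> ?thesis"
  then obtain m0 \<mu> where mem: "(m0,\<mu>) \<in> set xs" and mu: "\<mu> \<noteq> 0" by auto
  define S where "S = snd ` set xs - {0, \<mu>}"
  have finS: "finite S" unfolding S_def by simp
  define q where "q = [:0,1:] * (\<Prod>\<nu>\<in>S. [:-\<nu>,1:])"
  have pq: "poly q x = x * (\<Prod>\<nu>\<in>S. x - \<nu>)" for x
    unfolding q_def by (simp add: poly_prod)
  have q0: "coeff q 0 = 0"
    using pq[of 0] by (simp add: poly_0_coeff_0)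
  have qmu: "poly q \<mu> \<noteq> 0"
    unfolding pq using mu finS by (auto simp: S_def)
  have sel: "\<forall>(m,a)\<in>set xs. poly q a = (if a = \<mu> then poly q \<mu> else 0)"
  proof (intro ballI, clarify)
    fix m a assume ma: "(m,a) \<in> set xs"
    show "poly q a = (if a = \<mu> then poly q \<mu> else 0)"
    proof (cases "a = \<mu> \<or> a = 0")
      case True then show ?thesis by (auto simp: pq)
    next
      case False
      then have "a \<in> S" using ma unfolding S_def by force
      then show ?thesis using False finS unfolding pq by (auto simp: prod_zero_iff)
    qed
  qed
  have "sum_list (map (\<lambda>(m,a). of_nat m * poly q a) xs) =
     sum_list (map (\<lambda>(m,a). of_nat m * (\<Sum>i\<le>degree q. coeff q i * a^i)) xs)"
    by (simp add: poly_altdef)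
  also have "\<dots> = (\<Sum>i\<le>degree q. coeff q i * sum_list (map (\<lambda>(m,a). of_nat m * a^i) xs))"
    by (rule sum_list_poly_expand)
  also have "\<dots> = 0"
  proof (rule sum.neutral, intro ballI)
    fix i assume "i \<in> {..degree q}"
    show "coeff q i * sum_list (map (\<lambda>(m,a). of_nat m * a^i) xs) = 0"
    proof (cases "i = 0")
      case True then show ?thesis by (simp add: q0)
    next
      case False then show ?thesis using z by simp
    qed
  qed
  finally have s0: "sum_list (map (\<lambda>(m,a). of_nat m * poly q a) xs) = 0" .
  define N where "N = sum_list (map (\<lambda>(m,a). if a = \<mu> then m else 0) xs)"
  have eq: "sum_list (map (\<lambda>(m,a). of_nat m * poly q a) xs) = of_nat N * poly q \<mu>"
    unfolding N_def by (rule sum_list_select[OF sel])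
  have "m0 \<le> N"
  proof -
    have "m0 \<in> set (map (\<lambda>(m,a). if a = \<mu> then m else 0) xs)"
      using mem by force
    then show ?thesis unfolding N_def by (rule member_le_sum_list) auto
  qed
  moreover have "m0 > 0" using pos mem by auto
  ultimately have "N > 0" by linarith
  then have "(of_nat N :: complex) \<noteq> 0" by (simp only: of_nat_eq_0_iff)
  then have "(of_nat N :: complex) * poly q \<mu> \<noteq> 0" using qmu by (simp only: mult_eq_0_iff) argo
  then show False using s0 eq by argo
qed


lemma diag_block_mat_zeros:
  "diag_block_mat (map (\<lambda>(m,a). 0\<^sub>m m m) xs) = (0\<^sub>m (sum_list (map fst xs)) (sum_list (map fst xs)) :: 'a::zero mat)"
proof (induct xs)
  case Nil then show ?case by simp
next
  case (Cons x xs)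
  obtain m a where x: "x = (m,a)" by fastforce
  show ?case using Cons by (simp add: x Let_def)
qed

lemma jnf_nilp_iff:
  fixes A :: "complex mat"
  assumes A: "A \<in> carrier_mat n n"
  shows "(\<exists>k. A ^\<^sub>m k = 0\<^sub>m n n) \<longleftrightarrow> (\<forall>k\<ge>1. trm (A ^\<^sub>m k) = 0)"
proof -
  obtain as where "char_poly A = (\<Prod>a\<leftarrow>as. [:-a,1:])" using char_poly_factorized[OF A] by auto
  then obtain n_as where jnf: "jordan_nf A n_as" using jordan_nf_exists[OF A] by auto
  let ?J = "jordan_matrix n_as"
  from jnf have pos0: "0 \<notin> fst ` set n_as" and "similar_mat A ?J" unfolding jordan_nf_def by auto
  then obtain P Q where w: "similar_mat_wit A ?J P Q" unfolding similar_mat_def by auto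
  have dA: "dim_row A = n" using A by simp
  from w have J: "?J \<in> carrier_mat n n" and P: "P \<in> carrier_mat n n" and Q: "Q \<in> carrier_mat n n"
    and PQ: "P * Q = 1\<^sub>m n" and QP: "Q * P = 1\<^sub>m n"
    unfolding similar_mat_wit_def Let_def dA by auto
  have pos: "\<forall>(m,a)\<in>set n_as. m > 0" using pos0 by force
  have pow: "A ^\<^sub>m k = P * ?J ^\<^sub>m k * Q" for k using similar_mat_wit_pow_id[OF w] .
  have Jk: "?J ^\<^sub>m k \<in> carrier_mat n n" for k using J by simp
  have tr: "trm (A ^\<^sub>m k) = sum_list (map (\<lambda>(m,a). of_nat m * a^k) n_as)" for k
  proof -
    have "trm (A ^\<^sub>m k) = trm ((P * ?J ^\<^sub>m k) * Q)" by (simp add: pow)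
    also have "\<dots> = trm (Q * (P * ?J ^\<^sub>m k))"
      by (rule trm_mult_comm[of _ n n]) (use P Q Jk in auto)
    also have "Q * (P * ?J ^\<^sub>m k) = (Q * P) * ?J ^\<^sub>m k"
      using P Q Jk by (simp add: assoc_mult_mat[of _ n n _ n _ n])
    also have "\<dots> = ?J ^\<^sub>m k" using QP left_mult_one_mat[OF Jk] by simp
    finally show ?thesis by (simp add: trm_jordan_pow)
  qed
  have bk: "?J ^\<^sub>m k = Q * A ^\<^sub>m k * P" for k
  proof -
    have "Q * A ^\<^sub>m k * P = Q * (P * ?J ^\<^sub>m k * Q) * P" by (simp add: pow)
    also have "\<dots> = ?J ^\<^sub>m k"
    proof -
      have c1: "P * ?J ^\<^sub>m k \<in> carrier_mat n n" using P Jk by simp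
      have c2: "P * ?J ^\<^sub>m k * Q \<in> carrier_mat n n" using c1 Q by simp
      have "Q * (P * ?J ^\<^sub>m k * Q) * P = Q * ((P * ?J ^\<^sub>m k * Q) * P)"
        using assoc_mult_mat[OF Q c2 P] .
      also have "(P * ?J ^\<^sub>m k * Q) * P = (P * ?J ^\<^sub>m k) * (Q * P)"
        using assoc_mult_mat[OF c1 Q P] .
      also have "\<dots> = P * ?J ^\<^sub>m k" using QP right_mult_one_mat[OF c1] by simp
      also have "Q * (P * ?J ^\<^sub>m k) = (Q * P) * ?J ^\<^sub>m k"
        using assoc_mult_mat[OF Q P Jk] by simp
      also have "\<dots> = ?J ^\<^sub>m k" using QP left_mult_one_mat[OF Jk] by simp
      finally show ?thesis .
    qed
    finally show ?thesis by simp
  qed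
  have z1: "\<forall>(m,a)\<in>set n_as. a = 0" if "A ^\<^sub>m k = 0\<^sub>m n n" for k
  proof -
    have "?J ^\<^sub>m k = 0\<^sub>m n n" using bk[of k] that right_mult_zero_mat[OF Q] left_mult_zero_mat[OF P] by simp
    then have "concat (map (\<lambda>(m,a). replicate m (a ^ k)) n_as) = replicate n 0"
      using diag_jordan_pow[of n_as k] by simp
    then show ?thesis
    proof (intro ballI, clarify)
      fix m a assume e: "concat (map (\<lambda>(m,a). replicate m (a ^ k)) n_as) = replicate n 0"
        and ma: "(m,a) \<in> set n_as"
      have "m > 0" using pos ma by auto
      have r: "replicate m (a^k) \<in> set (map (\<lambda>(m,a). replicate m (a ^ k)) n_as)"
        using imageI[OF ma, of "\<lambda>(m,a). replicate m (a ^ k)"] by simp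
      have "a ^ k \<in> set (replicate m (a^k))" using \<open>m > 0\<close> by simp
      then have "a ^ k \<in> set (concat (map (\<lambda>(m,a). replicate m (a ^ k)) n_as))"
        using r unfolding set_concat by blast
      then have "a ^ k = 0" unfolding e by simp
      then show "a = 0" by simp
    qed
  qed
  have "dim_row ?J = n" using J by (rule carrier_matD)
  then have nsum: "sum_list (map fst n_as) = n" by (simp only: jordan_matrix_dim)
  have z2: "A ^\<^sub>m n = 0\<^sub>m n n" if az: "\<forall>(m,a)\<in>set n_as. a = 0"
  proof -
    have mz: "map (\<lambda>(m,a). jordan_block m a ^\<^sub>m n) n_as = map (\<lambda>(m,a). 0\<^sub>m m m) n_as"
    proof (rule map_cong[OF refl])
      fix x assume x: "x \<in> set n_as"
      obtain m a where xma: "x = (m,a)" by (cases x)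
      have ma: "(m,a) \<in> set n_as" using x unfolding xma .
      have a0: "a = 0" using az ma by blast
      have "m \<in> fst ` set n_as" using imageI[OF ma, of fst] by simp
      then have "m \<in> set (map fst n_as)" by (simp only: set_map)
      then have "m \<le> sum_list (map fst n_as)" by (rule member_le_sum_list) simp
      then have mn: "m \<le> n" by (simp only: nsum)
      have "jordan_block m a ^\<^sub>m n = 0\<^sub>m m m"
        unfolding a0 jordan_block_zero_pow using mn by (intro eq_matI) auto
      then show "(case x of (m,a) \<Rightarrow> jordan_block m a ^\<^sub>m n) = (case x of (m,a) \<Rightarrow> 0\<^sub>m m m)"
        unfolding xma prod.case .
    qed
    have "?J ^\<^sub>m n = 0\<^sub>m n n"
      unfolding jordan_matrix_pow mz diag_block_mat_zeros nsum by (rule refl)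
    then show ?thesis using pow[of n] right_mult_zero_mat[OF P] left_mult_zero_mat[OF Q] by simp
  qed
  show ?thesis
  proof
    assume "\<exists>k. A ^\<^sub>m k = 0\<^sub>m n n"
    then obtain k where "A ^\<^sub>m k = 0\<^sub>m n n" by auto
    from z1[OF this] have az: "\<forall>(m,a)\<in>set n_as. a = 0" .
    show "\<forall>k\<ge>1. trm (A ^\<^sub>m k) = 0"
    proof (intro allI impI)
      fix j :: nat assume "j \<ge> 1"
      have "sum_list (map (\<lambda>(m,a). of_nat m * a^j) n_as) = sum_list (map (\<lambda>x. 0::complex) n_as)"
        by (rule arg_cong[where f=sum_list], rule map_cong[OF refl]) (use az \<open>j \<ge> 1\<close> in auto)
      then show "trm (A ^\<^sub>m j) = 0" unfolding tr by (simp add: map_replicate_const sum_list_replicate)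
    qed
  next
    assume "\<forall>k\<ge>1. trm (A ^\<^sub>m k) = 0"
    then have "\<forall>k\<ge>1. sum_list (map (\<lambda>(m,a). of_nat m * a^k) n_as) = 0" using tr by simp
    from power_sums_zero[OF pos this] show "\<exists>k. A ^\<^sub>m k = 0\<^sub>m n n" using z2 by blast
  qed
qed


no_notation Matrix.vec_index (infixl "$" 100)

abbreviation ct :: "complex^'n^'n \<Rightarrow> complex^'n^'n" where "ct \<equiv> conj_transpose"

lemma ct_nth[simp]: "ct X $ i $ j = cnj (X $ j $ i)"
  by (simp add: conj_transpose_def)

lemma ct_mult: "ct (X ** Y) = ct Y ** ct X"
  by (simp add: Finite_Cartesian_Product.vec_eq_iff matrix_matrix_mult_def mult.commute)

lemma ct_ct[simp]: "ct (ct X) = X"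
  by (simp add: Finite_Cartesian_Product.vec_eq_iff)

lemma ct_diff: "ct (X - Y) = ct X - ct Y"
  by (simp add: Finite_Cartesian_Product.vec_eq_iff)

lemma ct_scaleR: "ct (r *\<^sub>R X) = r *\<^sub>R ct X"
  by (simp add: Finite_Cartesian_Product.vec_eq_iff)

lemma ct_zero[simp]: "ct 0 = 0"
  by (simp add: Finite_Cartesian_Product.vec_eq_iff)

lemma trace_ct: "trace (ct X) = cnj (trace X)"
  by (simp add: trace_def)

lemma mm_diff_left: "(X - Y) ** (Z::complex^'n^'n) = X ** Z - Y ** Z"
  by (simp add: Finite_Cartesian_Product.vec_eq_iff matrix_matrix_mult_def sum_subtractf algebra_simps)

lemma mm_diff_right: "(Z::complex^'n^'n) ** (X - Y) = Z ** X - Z ** Y"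
  by (simp add: Finite_Cartesian_Product.vec_eq_iff matrix_matrix_mult_def sum_subtractf algebra_simps)

lemma mm_add_left: "(X + Y) ** (Z::complex^'n^'n) = X ** Z + Y ** Z"
  by (simp add: Finite_Cartesian_Product.vec_eq_iff matrix_matrix_mult_def sum.distrib algebra_simps)

lemma mm_neg_left: "(- X) ** (Z::complex^'n^'n) = - (X ** Z)"
  by (simp add: Finite_Cartesian_Product.vec_eq_iff matrix_matrix_mult_def sum_negf)

lemma mm_neg_right: "(Z::complex^'n^'n) ** (- X) = - (Z ** X)"
  by (simp add: Finite_Cartesian_Product.vec_eq_iff matrix_matrix_mult_def sum_negf)

lemma mm_scaleR_left: "(r *\<^sub>R X) ** (Z::complex^'n^'n) = r *\<^sub>R (X ** Z)"
  by (simp add: scalar_matrix_assoc)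

lemma mm_scaleR_right: "(Z::complex^'n^'n) ** (r *\<^sub>R X) = r *\<^sub>R (Z ** X)"
  by (simp add: matrix_scalar_ac scalar_matrix_assoc)

lemma inner_trace: "inner X Y = Re (trace (X ** ct (Y::complex^'n^'n)))"
  by (simp add: inner_vec_def trace_def matrix_matrix_mult_def inner_complex_def)

lemma norm_sq_trace: "(norm X)^2 = Re (trace (X ** ct (X::complex^'n^'n)))"
  by (simp add: power2_norm_eq_inner inner_trace)

lemma trace_scaleR: "trace (r *\<^sub>R X) = r *\<^sub>R trace (X::complex^'n^'n)"
  by (simp add: trace_def scaleR_sum_right)

lemma mat_pow_0: "mat_pow X 0 = Finite_Cartesian_Product.mat 1"
  unfolding mat_pow_def by simp

lemma mat_pow_Suc: "mat_pow X (Suc k) = X ** mat_pow X k"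
  unfolding mat_pow_def by simp

lemma mat_pow_Suc': "mat_pow X (Suc k) = mat_pow X k ** X"
proof (induct k)
  case 0 then show ?case by (simp add: mat_pow_Suc mat_pow_0)
next
  case (Suc k)
  have "mat_pow X (Suc (Suc k)) = X ** (mat_pow X k ** X)" using Suc by (simp add: mat_pow_Suc)
  also have "\<dots> = (X ** mat_pow X k) ** X" by (simp add: matrix_mul_assoc)
  finally show ?case by (simp add: mat_pow_Suc)
qed

lemma bb_mm: "bounded_bilinear (\<lambda>X Y. (X::complex^'n^'n) ** (Y::complex^'n^'n))"
proof -
  have "bilinear (\<lambda>X Y. (X::complex^'n^'n) ** (Y::complex^'n^'n))"
    by (auto simp: bilinear_def matrix_add_ldistrib mm_add_left mm_scaleR_left mm_scaleR_right intro!: linearI)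
  then show ?thesis by (simp add: bilinear_conv_bounded_bilinear)
qed

lemma bl_trace: "bounded_linear (trace :: complex^'n^'n \<Rightarrow> complex)"
proof -
  have "bounded_linear (\<lambda>X::complex^'n^'n. \<Sum>i\<in>UNIV. X $ i $ i)"
    by (intro bounded_linear_sum bounded_linear_compose[OF bounded_linear_vec_nth bounded_linear_vec_nth])
  then show ?thesis unfolding trace_def[abs_def] .
qed



definition tj :: "(nat \<Rightarrow> 'n::finite) \<Rightarrow> complex^'n^'n \<Rightarrow> complex mat" where
  "tj h X = Matrix.mat CARD('n) CARD('n) (\<lambda>(i,j). X $ h i $ h j)"

lemma tj_carrier: "tj h X \<in> carrier_mat CARD('n) CARD('n)"
  for X :: "complex^'n::finite^'n"
  unfolding tj_def carrier_mat_def by simp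

lemma tj_index: "i < CARD('n) \<Longrightarrow> j < CARD('n) \<Longrightarrow> tj h X $$ (i,j) = X $ h i $ h j"
  for X :: "complex^'n::finite^'n"
  unfolding tj_def by simp

lemma tj_dims[simp]: "dim_row (tj h X) = CARD('n)" "dim_col (tj h X) = CARD('n)"
  for X :: "complex^'n::finite^'n"
  unfolding tj_def by simp_all

lemma tj_mult:
  fixes X Y :: "complex^'n::finite^'n"
  assumes hb: "bij_betw h {..<CARD('n)} (UNIV::'n set)"
  shows "tj h (X ** Y) = tj h X * tj h Y"
proof (rule eq_matI)
  fix i j assume i: "i < dim_row (tj h X * tj h Y)" and j: "j < dim_col (tj h X * tj h Y)"
  then have i': "i < CARD('n)" and j': "j < CARD('n)" by simp_all
  have "(tj h X * tj h Y) $$ (i,j) = (\<Sum>k\<in>{0..<CARD('n)}. tj h X $$ (i,k) * tj h Y $$ (k,j))"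
    using i' j' by (simp add: scalar_prod_def)
  also have "\<dots> = (\<Sum>k<CARD('n). X $ h i $ h k * Y $ h k $ h j)"
    using i' j' by (simp add: tj_index atLeast0LessThan)
  also have "\<dots> = (\<Sum>k\<in>UNIV. X $ h i $ k * Y $ k $ h j)"
    by (rule sum.reindex_bij_betw[OF hb, of "\<lambda>k. X $ h i $ k * Y $ k $ h j"])
  also have "\<dots> = tj h (X ** Y) $$ (i,j)"
    using i' j' by (simp add: tj_index matrix_matrix_mult_def)
  finally show "tj h (X ** Y) $$ (i,j) = (tj h X * tj h Y) $$ (i,j)" by simp
qed simp_all

lemma tj_one:
  assumes hb: "bij_betw h {..<CARD('n)} (UNIV::'n::finite set)"
  shows "tj h (Finite_Cartesian_Product.mat 1 :: complex^'n^'n) = 1\<^sub>m CARD('n)"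
proof (rule eq_matI)
  fix i j assume "i < dim_row (1\<^sub>m CARD('n) :: complex mat)" "j < dim_col (1\<^sub>m CARD('n) :: complex mat)"
  then have i': "i < CARD('n)" and j': "j < CARD('n)" by simp_all
  have "h i = h j \<longleftrightarrow> i = j"
    using hb i' j' unfolding bij_betw_def inj_on_def by auto
  then show "tj h (Finite_Cartesian_Product.mat 1 :: complex^'n^'n) $$ (i,j) = 1\<^sub>m CARD('n) $$ (i,j)"
    using i' j' by (simp add: tj_index Finite_Cartesian_Product.mat_def)
qed simp_all

lemma tj_pow:
  fixes X :: "complex^'n::finite^'n"
  assumes hb: "bij_betw h {..<CARD('n)} (UNIV::'n set)"
  shows "tj h (mat_pow X k) = tj h X ^\<^sub>m k"
proof (induct k)
  case 0 then show ?case by (simp add: mat_pow_0 tj_one[OF hb])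
next
  case (Suc k)
  then show ?case by (simp add: mat_pow_Suc' tj_mult[OF hb])
qed

lemma tj_zero_iff:
  fixes X :: "complex^'n::finite^'n"
  assumes hb: "bij_betw h {..<CARD('n)} (UNIV::'n set)"
  shows "tj h X = 0\<^sub>m CARD('n) CARD('n) \<longleftrightarrow> X = 0"
proof
  assume z: "tj h X = 0\<^sub>m CARD('n) CARD('n)"
  have "X $ a $ b = 0" for a b
  proof -
    obtain i where i: "i < CARD('n)" "h i = a" using hb unfolding bij_betw_def by (metis UNIV_I imageE lessThan_iff)
    obtain j where j: "j < CARD('n)" "h j = b" using hb unfolding bij_betw_def by (metis UNIV_I imageE lessThan_iff)
    have "tj h X $$ (i,j) = 0" using z i j by simp
    then show "X $ a $ b = 0" using i j by (simp add: tj_index)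
  qed
  then show "X = 0" by (simp add: Finite_Cartesian_Product.vec_eq_iff)
next
  assume "X = 0"
  then show "tj h X = 0\<^sub>m CARD('n) CARD('n)"
    by (intro eq_matI) (simp_all add: tj_index)
qed

lemma trace_tj:
  fixes X :: "complex^'n::finite^'n"
  assumes hb: "bij_betw h {..<CARD('n)} (UNIV::'n set)"
  shows "trace X = trm (tj h X)"
proof -
  have "trm (tj h X) = (\<Sum>i<CARD('n). X $ h i $ h i)"
    by (simp add: trm_alt tj_index)
  also have "\<dots> = (\<Sum>i\<in>UNIV. X $ i $ i)"
    by (rule sum.reindex_bij_betw[OF hb, of "\<lambda>i. X $ i $ i"])
  finally show ?thesis by (simp add: trace_def)
qed

lemma nilp_iff_traces:
  fixes X :: "complex^'n::finite^'n"
  shows "nilpotent_matrix X \<longleftrightarrow> (\<forall>k\<ge>1. trace (mat_pow X k) = 0)"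
proof -
  obtain h where hb0: "bij_betw h {0..<card (UNIV::'n set)} (UNIV::'n set)"
    using ex_bij_betw_nat_finite[of "UNIV::'n set"] by auto
  then have hb: "bij_betw h {..<CARD('n)} (UNIV::'n set)" by (simp add: atLeast0LessThan)
  have "nilpotent_matrix X \<longleftrightarrow> (\<exists>k. tj h X ^\<^sub>m k = 0\<^sub>m CARD('n) CARD('n))"
    unfolding nilpotent_matrix_def tj_pow[OF hb, symmetric] tj_zero_iff[OF hb] ..
  also have "\<dots> \<longleftrightarrow> (\<forall>k\<ge>1. trm (tj h X ^\<^sub>m k) = 0)"
    by (rule jnf_nilp_iff[OF tj_carrier])
  also have "\<dots> \<longleftrightarrow> (\<forall>k\<ge>1. trace (mat_pow X k) = 0)"
    by (simp add: trace_tj[OF hb] tj_pow[OF hb])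
  finally show ?thesis .
qed


definition Yf :: "complex^'n^'n \<Rightarrow> complex^'n^'n" where "Yf X = - (X ** ct X)"

lemma D_eq: "X ** commutator X (ct X) = Yf X ** X - X ** Yf X"
  by (simp add: Yf_def commutator_def mm_diff_right mm_neg_left mm_neg_right matrix_mul_assoc)

lemma key_identity:
  fixes X :: "complex^'n^'n"
  shows "2 * inner X (X ** commutator X (ct X)) = - ((norm (commutator X (ct X)))^2)"
proof -
  let ?P = X and ?Q = "ct X"
  have t1: "trace (?Q ** ?Q ** ?P ** ?P) = trace (?P ** ?P ** ?Q ** ?Q)"
    using trace_mul_sym[of "?Q ** ?Q" "?P ** ?P"] by (simp add: matrix_mul_assoc)
  have t2: "trace (?P ** ?Q ** ?Q ** ?P) = trace (?P ** ?P ** ?Q ** ?Q)"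
    using trace_mul_sym[of ?P "?Q ** ?Q ** ?P"] t1 by (simp add: matrix_mul_assoc)
  have t3: "trace (?Q ** ?P ** ?P ** ?Q) = trace (?P ** ?P ** ?Q ** ?Q)"
    using trace_mul_sym[of ?Q "?P ** ?P ** ?Q"] by (simp add: matrix_mul_assoc)
  have t4: "trace (?Q ** ?P ** ?Q ** ?P) = trace (?P ** ?Q ** ?P ** ?Q)"
    using trace_mul_sym[of ?Q "?P ** ?Q ** ?P"] by (simp add: matrix_mul_assoc)
  let ?C = "commutator X (ct X)"
  have ctC: "ct ?C = ?C"
    by (simp add: commutator_def ct_diff ct_mult)
  have "inner X (X ** ?C) = inner (X ** ?C) X" by (rule inner_commute)
  also have "\<dots> = Re (trace (X ** ?C ** ct X))" by (rule inner_trace)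
  also have "X ** ?C ** ct X = ?P ** ?P ** ?Q ** ?Q - ?P ** ?Q ** ?P ** ?Q"
    by (simp add: commutator_def mm_diff_right mm_diff_left matrix_mul_assoc)
  finally have i1: "inner X (X ** ?C) = Re (trace (?P ** ?P ** ?Q ** ?Q)) - Re (trace (?P ** ?Q ** ?P ** ?Q))"
    by (simp add: trace_sub)
  have "(norm ?C)^2 = Re (trace (?C ** ct ?C))" by (rule norm_sq_trace)
  also have "?C ** ct ?C = ?C ** ?C" by (simp only: ctC)
  also have "?C ** ?C = ?P ** ?Q ** ?P ** ?Q - ?P ** ?Q ** ?Q ** ?P - (?Q ** ?P ** ?P ** ?Q - ?Q ** ?P ** ?Q ** ?P)"
    by (simp add: commutator_def mm_diff_right mm_diff_left matrix_mul_assoc)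
  finally have i2: "(norm ?C)^2 = 2 * Re (trace (?P ** ?Q ** ?P ** ?Q)) - 2 * Re (trace (?P ** ?P ** ?Q ** ?Q))"
    by (simp add: trace_sub t2 t3 t4)
  show ?thesis using i1 i2 by simp
qed

locale flow =
  fixes A :: "real \<Rightarrow> complex^'n^'n"
  assumes ode: "\<And>t. t \<ge> 0 \<Longrightarrow>
      (A has_vector_derivative (A t ** commutator (A t) (conj_transpose (A t)))) (at t within {0..})"
begin

lemma pow_deriv:
  assumes t: "t \<ge> 0"
  shows "((\<lambda>t. mat_pow (A t) k) has_vector_derivative
           (Yf (A t) ** mat_pow (A t) k - mat_pow (A t) k ** Yf (A t))) (at t within {0..})"
proof (induct k)
  case 0
  then show ?case by (simp add: mat_pow_def)
next
  case (Suc k)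
  have "((\<lambda>t. A t ** mat_pow (A t) k) has_vector_derivative
     (A t ** (Yf (A t) ** mat_pow (A t) k - mat_pow (A t) k ** Yf (A t)) +
      (A t ** commutator (A t) (ct (A t))) ** mat_pow (A t) k)) (at t within {0..})"
    by (rule bounded_bilinear.has_vector_derivative[OF bb_mm ode[OF t] Suc])
  then show ?case unfolding mat_pow_Suc
  proof (rule has_vector_derivative_eq_rhs)
    show "A t ** (Yf (A t) ** mat_pow (A t) k - mat_pow (A t) k ** Yf (A t)) +
      (A t ** commutator (A t) (ct (A t))) ** mat_pow (A t) k =
      Yf (A t) ** (A t ** mat_pow (A t) k) - (A t ** mat_pow (A t) k) ** Yf (A t)"
      unfolding D_eq by (simp add: mm_diff_right mm_diff_left matrix_mul_assoc)
  qed
qed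

lemma trace_const:
  assumes t: "t \<ge> 0"
  shows "trace (mat_pow (A t) k) = trace (mat_pow (A 0) k)"
proof -
  have "\<forall>s\<in>{0..}. ((\<lambda>t. trace (mat_pow (A t) k)) has_derivative (\<lambda>h. 0)) (at s within {0..})"
  proof
    fix s :: real assume "s \<in> {0..}"
    then have s: "s \<ge> 0" by simp
    have "((\<lambda>t. trace (mat_pow (A t) k)) has_vector_derivative
        trace (Yf (A s) ** mat_pow (A s) k - mat_pow (A s) k ** Yf (A s))) (at s within {0..})"
      by (rule bounded_linear.has_vector_derivative[OF bl_trace pow_deriv[OF s]])
    moreover have "trace (Yf (A s) ** mat_pow (A s) k - mat_pow (A s) k ** Yf (A s)) = 0"
      by (simp add: trace_sub trace_mul_sym[of "Yf (A s)"])
    ultimately show "((\<lambda>t. trace (mat_pow (A t) k)) has_derivative (\<lambda>h. 0)) (at s within {0..})"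
      by (simp add: has_vector_derivative_def)
  qed
  with has_derivative_zero_constant[of "{0::real..}" "\<lambda>t. trace (mat_pow (A t) k)"]
  obtain c where "\<forall>x\<in>{0..}. trace (mat_pow (A x) k) = c" by auto
  then show ?thesis using t by simp
qed

lemma norm_deriv:
  assumes t: "t \<ge> 0"
  shows "((\<lambda>t. (norm (A t))^2) has_real_derivative (- ((norm (commutator (A t) (ct (A t))))^2))) (at t within {0..})"
proof -
  let ?D = "A t ** commutator (A t) (ct (A t))"
  have dA: "(A has_derivative (\<lambda>h. h *\<^sub>R ?D)) (at t within {0..})"
    using ode[OF t] by (simp add: has_vector_derivative_def)
  have "((\<lambda>t. inner (A t) (A t)) has_derivative (\<lambda>h. inner (A t) (h *\<^sub>R ?D) + inner (h *\<^sub>R ?D) (A t))) (at t within {0..})"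
    by (rule has_derivative_inner[OF dA dA])
  moreover have "(\<lambda>h. inner (A t) (h *\<^sub>R ?D) + inner (h *\<^sub>R ?D) (A t)) = (*) (- ((norm (commutator (A t) (ct (A t))))^2))"
  proof
    fix h :: real
    have k: "2 * inner (A t) ?D = - ((norm (commutator (A t) (ct (A t))))^2)" by (rule key_identity)
    have "inner (A t) (h *\<^sub>R ?D) + inner (h *\<^sub>R ?D) (A t) = h * (2 * inner (A t) ?D)"
      by (simp add: inner_commute[of ?D] algebra_simps)
    also have "\<dots> = h * (- ((norm (commutator (A t) (ct (A t))))^2))" by (simp only: k)
    also have "\<dots> = (- ((norm (commutator (A t) (ct (A t))))^2)) * h" by (rule mult.commute)
    finally show "inner (A t) (h *\<^sub>R ?D) + inner (h *\<^sub>R ?D) (A t) = (- ((norm (commutator (A t) (ct (A t))))^2)) * h" .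
  qed
  ultimately have "((\<lambda>t. inner (A t) (A t)) has_derivative (*) (- ((norm (commutator (A t) (ct (A t))))^2))) (at t within {0..})"
    by (rule has_derivative_eq_rhs)
  moreover have "(\<lambda>t. (norm (A t))^2) = (\<lambda>t. inner (A t) (A t))" by (simp add: power2_norm_eq_inner)
  ultimately show ?thesis unfolding has_field_derivative_def by simp
qed

end


lemma mat_pow_add: "mat_pow X (a + b) = mat_pow X a ** mat_pow X b"
  by (induct a) (simp_all add: mat_pow_0 mat_pow_Suc matrix_mul_assoc)

lemma mat_pow_zero_mono: "mat_pow X a = 0 \<Longrightarrow> a \<le> b \<Longrightarrow> mat_pow X b = 0"
  using mat_pow_add[of X a "b - a"] by simp

lemma mat_pow_1: "mat_pow X 1 = X"
  by (simp add: mat_pow_Suc[of X 0, simplified] mat_pow_0)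

lemma mat_pow_Suc0[simp]: "mat_pow X (Suc 0) = X"
  by (simp add: mat_pow_Suc mat_pow_0)

lemma trace_zero[simp]: "trace (0::complex^'n^'n) = 0"
  by (simp add: trace_def)

lemma pow_comm_self: "mat_pow X k ** X = X ** mat_pow X k"
  by (metis mat_pow_Suc mat_pow_Suc')

lemma ct_one: "ct (Finite_Cartesian_Product.mat 1) = Finite_Cartesian_Product.mat 1"
  by (simp add: Finite_Cartesian_Product.vec_eq_iff Finite_Cartesian_Product.mat_def)

lemma ct_pow: "ct (mat_pow X k) = mat_pow (ct X) k"
  by (induct k) (simp_all add: mat_pow_0 ct_one mat_pow_Suc ct_mult pow_comm_self)

lemma commute_pow: "X ** Y = Y ** X \<Longrightarrow> mat_pow X k ** Y = Y ** mat_pow X k"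
proof (induct k)
  case 0 then show ?case by (simp add: mat_pow_0)
next
  case (Suc k)
  have "mat_pow X (Suc k) ** Y = X ** (mat_pow X k ** Y)" by (simp add: mat_pow_Suc matrix_mul_assoc)
  also have "\<dots> = (X ** Y) ** mat_pow X k" using Suc by (simp add: matrix_mul_assoc)
  also have "\<dots> = Y ** mat_pow X (Suc k)" using Suc.prems by (simp add: mat_pow_Suc matrix_mul_assoc)
  finally show ?case .
qed

lemma pow_mult_commute: "X ** Y = Y ** X \<Longrightarrow> mat_pow (X ** Y) k = mat_pow X k ** mat_pow Y k"
proof (induct k)
  case 0 then show ?case by (simp add: mat_pow_0)
next
  case (Suc k)
  have c: "mat_pow X k ** Y = Y ** mat_pow X k" by (rule commute_pow[OF Suc.prems])
  have "mat_pow (X ** Y) (Suc k) = X ** (Y ** mat_pow X k) ** mat_pow Y k"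
    using Suc by (simp add: mat_pow_Suc matrix_mul_assoc)
  also have "\<dots> = X ** (mat_pow X k ** Y) ** mat_pow Y k" by (simp only: c)
  also have "\<dots> = mat_pow X (Suc k) ** mat_pow Y (Suc k)"
    by (simp add: mat_pow_Suc matrix_mul_assoc)
  finally show ?case .
qed

lemma norm_zero_trace: "Re (trace (X ** ct X)) = 0 \<Longrightarrow> X = (0::complex^'n^'n)"
  using norm_sq_trace[of X] by simp

lemma herm_half:
  assumes h: "ct H = H" and z: "mat_pow H (2*m) = 0"
  shows "mat_pow H m = 0"
proof -
  have "mat_pow H m ** ct (mat_pow H m) = mat_pow H (m + m)"
    by (simp add: ct_pow h mat_pow_add)
  also have "\<dots> = 0" using z by (simp add: mult_2)
  finally show ?thesis by (intro norm_zero_trace) (simp add: trace_def)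
qed

lemma herm_nilp:
  assumes h: "ct H = H" and z: "mat_pow H k = 0"
  shows "H = 0"
proof -
  have "mat_pow H (2^j) = 0 \<longrightarrow> H = 0" for j
  proof (induct j)
    case 0 then show ?case by (simp add: mat_pow_1)
  next
    case (Suc j)
    show ?case
    proof
      assume "mat_pow H (2 ^ Suc j) = 0"
      then have "mat_pow H (2 * 2^j) = 0" by simp
      then have "mat_pow H (2^j) = 0" by (rule herm_half[OF h])
      then show "H = 0" using Suc by simp
    qed
  qed
  moreover have "mat_pow H (2^k) = 0"
    by (rule mat_pow_zero_mono[OF z]) (simp add: less_imp_le)
  ultimately show ?thesis by blast
qed

lemma normal_nilp_zero:
  assumes n: "X ** ct X = ct X ** X" and z: "mat_pow X k = 0"
  shows "X = 0"
proof -
  let ?H = "ct X ** X"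
  have h: "ct ?H = ?H" by (simp add: ct_mult)
  have "mat_pow ?H k = mat_pow (ct X) k ** mat_pow X k"
    by (rule pow_mult_commute) (use n in simp)
  also have "\<dots> = 0" using z by simp
  finally have "?H = 0" by (rule herm_nilp[OF h])
  then have "Re (trace (X ** ct X)) = 0" by (simp add: trace_mul_sym[of X])
  then show ?thesis by (rule norm_zero_trace)
qed


definition gfun :: "complex^'n^'n \<Rightarrow> real" where
  "gfun X = (norm (commutator X (ct X)))^2"

lemma bl_ct: "bounded_linear (ct :: complex^'n^'n \<Rightarrow> complex^'n^'n)"
proof -
  have "linear (ct :: complex^'n^'n \<Rightarrow> complex^'n^'n)"
    by (rule linearI) (simp_all add: Finite_Cartesian_Product.vec_eq_iff)
  then show ?thesis by (simp add: linear_conv_bounded_linear)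
qed

lemma cont_mm: "continuous_on S F \<Longrightarrow> continuous_on S G \<Longrightarrow> continuous_on S (\<lambda>x. (F x::complex^'n^'n) ** (G x::complex^'n^'n))"
  using bounded_bilinear.continuous_on[OF bb_mm, of S F G] by simp

lemma cont_pow: "continuous_on S (\<lambda>X::complex^'n^'n. mat_pow X k)"
proof (induct k)
  case 0 then show ?case by (simp add: mat_pow_0)
next
  case (Suc k)
  show ?case unfolding mat_pow_Suc by (rule cont_mm[OF continuous_on_id Suc])
qed

lemma cont_trace_pow: "continuous_on S (\<lambda>X::complex^'n^'n. trace (mat_pow X k))"
  by (rule bounded_linear.continuous_on[OF bl_trace cont_pow])

lemma cont_gfun: "continuous_on (S::(complex^'n^'n) set) gfun"
proof -
  have c: "continuous_on S (ct :: complex^'n^'n \<Rightarrow> _)"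
    using bounded_linear.continuous_on[OF bl_ct continuous_on_id] by simp
  have "continuous_on S (\<lambda>X::complex^'n^'n. X ** ct X - ct X ** X)"
    by (intro continuous_on_diff cont_mm continuous_on_id c)
  then show ?thesis unfolding gfun_def commutator_def
    by (intro continuous_on_power continuous_on_norm)
qed

lemma mat_pow_scaleR: "mat_pow (r *\<^sub>R X) k = (r^k) *\<^sub>R mat_pow X k"
  by (induct k) (simp_all add: mat_pow_0 mat_pow_Suc mm_scaleR_left mm_scaleR_right)

lemma gfun_scale: "gfun (r *\<^sub>R X) = r^4 * gfun X"
proof -
  have "commutator (r *\<^sub>R X) (ct (r *\<^sub>R X)) = (r^2) *\<^sub>R commutator X (ct X)"
    by (simp add: commutator_def ct_scaleR mm_scaleR_left mm_scaleR_right power2_eq_square scaleR_diff_right)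
  then show ?thesis
    by (simp add: gfun_def power_mult_distrib power2_eq_square[of "\<bar>r\<bar>"] abs_mult_self_eq)
qed

lemma traces_scale:
  "(\<forall>k\<ge>1. trace (mat_pow X k) = 0) \<Longrightarrow> (\<forall>k\<ge>1. trace (mat_pow (r *\<^sub>R X) k) = 0)"
  by (simp add: mat_pow_scaleR trace_scaleR)

lemma nilp_const:
  "\<exists>c>0. \<forall>X::complex^'n^'n. (\<forall>k\<ge>1. trace (mat_pow X k) = 0) \<longrightarrow> c * (norm X)^4 \<le> gfun X"
proof -
  define K where "K = {X::complex^'n^'n. norm X = 1} \<inter> (\<Inter>k\<in>{1..}. {X. trace (mat_pow X k) = 0})"
  have closedK: "closed K"
    unfolding K_def
    by (intro closed_Int closed_INT ballI closed_Collect_eq continuous_on_norm continuous_on_id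
        continuous_on_const cont_trace_pow)
  have "bounded K" unfolding K_def bounded_iff by auto
  with closedK have compK: "compact K" by (simp add: compact_eq_bounded_closed)
  have scale: "c * (norm X)^4 \<le> gfun X"
    if c: "\<forall>Z\<in>K. c \<le> gfun Z" and tr: "\<forall>k\<ge>1. trace (mat_pow X k) = 0" for c and X :: "complex^'n^'n"
  proof (cases "X = 0")
    case True then show ?thesis by (simp add: gfun_def commutator_def)
  next
    case False
    define s where "s = norm X"
    have s: "s > 0" using False by (simp add: s_def)
    define Z where "Z = (1/s) *\<^sub>R X"
    have XZ: "X = s *\<^sub>R Z" using s by (simp add: Z_def)
    have "Z \<in> K" unfolding K_def
      using traces_scale[OF tr, of "1/s"] s by (simp add: Z_def s_def)
    then have "c \<le> gfun Z" using c by blast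
    then have "s^4 * c \<le> s^4 * gfun Z" using s by (simp add: mult_left_mono)
    moreover have "gfun X = s^4 * gfun Z" by (subst XZ) (rule gfun_scale)
    moreover have "c * (norm X)^4 = s^4 * c" by (simp add: s_def mult.commute)
    ultimately show ?thesis by (simp only:)
  qed
  show ?thesis
  proof (cases "K = {}")
    case True
    show ?thesis by (rule exI[of _ 1]) (use scale[of 1] True in auto)
  next
    case False
    obtain X0 where X0: "X0 \<in> K" and mn: "\<forall>Y\<in>K. gfun X0 \<le> gfun Y"
      using continuous_attains_inf[OF compK False cont_gfun] by blast
    have "gfun X0 > 0"
    proof (rule ccontr)
      assume "\<not> gfun X0 > 0"
      then have "gfun X0 = 0" by (simp add: gfun_def)
      then have "commutator X0 (ct X0) = 0" by (simp add: gfun_def)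
      then have nrm: "X0 ** ct X0 = ct X0 ** X0" by (simp add: commutator_def)
      have "nilpotent_matrix X0" using X0 unfolding K_def nilp_iff_traces by auto
      then obtain k where "mat_pow X0 k = 0" unfolding nilpotent_matrix_def by auto
      then have "X0 = 0" by (rule normal_nilp_zero[OF nrm])
      then show False using X0 unfolding K_def by simp
    qed
    then show ?thesis using scale[of "gfun X0"] mn by blast
  qed
qed


lemma mono_helper:
  fixes h h' :: "real \<Rightarrow> real"
  assumes a0: "0 \<le> a" and ab: "a \<le> b"
    and d: "\<And>t. a \<le> t \<Longrightarrow> t \<le> b \<Longrightarrow> (h has_real_derivative h' t) (at t within {0..})"
    and n: "\<And>t. a \<le> t \<Longrightarrow> t \<le> b \<Longrightarrow> h' t \<le> 0"
  shows "h b \<le> h a"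
proof -
  have cont: "continuous_on {a..b} h"
    unfolding continuous_on_eq_continuous_within
  proof
    fix x assume x: "x \<in> {a..b}"
    then have "continuous (at x within {0..}) h" using d[of x] DERIV_continuous by auto
    then show "continuous (at x within {a..b}) h"
      by (rule continuous_within_subset) (use a0 in auto)
  qed
  show "h b \<le> h a"
  proof (rule DERIV_nonpos_imp_decreasing_open[OF ab _ cont])
    fix x assume ax: "a < x" and xb: "x < b"
    have "at x within {0..} = at x" by (rule at_within_interior) (use ax a0 in auto)
    then have "(h has_real_derivative h' x) (at x)" using d[of x] ax xb by auto
    then show "\<exists>y. (h has_real_derivative y) (at x) \<and> y \<le> 0" using n[of x] ax xb by auto
  qed
qed

context flow
begin

lemma tends_zero:
  assumes nil: "nilpotent_matrix (A 0)"
  shows "(A \<longlongrightarrow> 0) at_top"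
proof -
  obtain c where c: "c > 0" and cX: "\<And>X::complex^'n^'n. (\<forall>k\<ge>1. trace (mat_pow X k) = 0) \<Longrightarrow> c * (norm X)^4 \<le> gfun X"
    using nilp_const by blast
  have tr0: "\<forall>k\<ge>1. trace (mat_pow (A 0) k) = 0" using nil nilp_iff_traces by blast
  have trt: "\<forall>k\<ge>1. trace (mat_pow (A t) k) = 0" if "t \<ge> 0" for t
    using tr0 trace_const[OF that] by simp
  define f where "f t = (norm (A t))^2" for t
  have fd: "(f has_real_derivative - gfun (A t)) (at t within {0..})" if "t \<ge> 0" for t
    unfolding f_def gfun_def using norm_deriv[OF that] .
  have gpos: "gfun X \<ge> 0" for X :: "complex^'n^'n" by (simp add: gfun_def)
  have fpos: "f t \<ge> 0" for t by (simp add: f_def)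
  have fmono: "f b \<le> f a" if "0 \<le> a" "a \<le> b" for a b
    by (rule mono_helper[OF that, of f "\<lambda>t. - gfun (A t)"]) (use fd gpos that in auto)
  have key: "\<exists>T. \<forall>t\<ge>T. f t < \<epsilon>" if e: "\<epsilon> > 0" for \<epsilon>
  proof -
    define T where "T = f 0 / (c * \<epsilon>^2) + 1"
    have ce: "c * \<epsilon>^2 > 0" using c e by simp
    have T0: "T \<ge> 0" unfolding T_def using ce fpos[of 0] by simp
    have cT: "c * \<epsilon>^2 * T = f 0 + c * \<epsilon>^2" unfolding T_def using ce c e by (simp add: field_simps)
    have fT: "f T < \<epsilon>"
    proof (rule ccontr)
      assume "\<not> f T < \<epsilon>"
      then have fTe: "\<epsilon> \<le> f T" by simp
      define h where "h t = f t + c * \<epsilon>^2 * t" for t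
      have "h T \<le> h 0"
      proof (rule mono_helper[OF order.refl T0, of h "\<lambda>t. - gfun (A t) + c * \<epsilon>^2"])
        fix t assume t0: "0 \<le> t" and tT: "t \<le> T"
        show "(h has_real_derivative - gfun (A t) + c * \<epsilon>^2) (at t within {0..})"
          unfolding h_def[abs_def]
          by (rule derivative_eq_intros fd[OF t0] | simp)+
        have ft: "\<epsilon> \<le> f t" using fmono[OF t0 tT] fTe by simp
        have "\<epsilon>^2 \<le> (f t)^2" using ft e by (simp add: power_mono)
        then have "c * \<epsilon>^2 \<le> c * (f t)^2" using c by simp
        also have "c * (f t)^2 = c * (norm (A t))^4" by (simp add: f_def power_mult[symmetric])
        also have "\<dots> \<le> gfun (A t)" using cX[OF trt[OF t0]] .
        finally show "- gfun (A t) + c * \<epsilon>^2 \<le> 0" by simp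
      qed
      then have "f T + c * \<epsilon>^2 * T \<le> f 0" by (simp add: h_def)
      then have "f T + c * \<epsilon>^2 \<le> 0" using cT by simp
      then show False using fTe e ce by linarith
    qed
    have "\<forall>t\<ge>T. f t < \<epsilon>"
    proof (intro allI impI)
      fix t assume "T \<le> t"
      then have "f t \<le> f T" using fmono[OF T0] by simp
      then show "f t < \<epsilon>" using fT by simp
    qed
    then show ?thesis by blast
  qed
  show ?thesis
    unfolding tendsto_iff eventually_at_top_linorder
  proof (intro allI impI)
    fix e :: real assume e: "e > 0"
    obtain T where T: "\<forall>t\<ge>T. f t < e^2" using key[of "e^2"] e by auto
    show "\<exists>N. \<forall>t\<ge>N. dist (A t) 0 < e"
    proof (intro exI allI impI)
      fix t assume "T \<le> t"
      then have "(norm (A t))^2 < e^2" using T by (simp add: f_def)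
      then have "norm (A t) < e" by (rule power2_less_imp_less) (use e in simp)
      then show "dist (A t) 0 < e" by simp
    qed
  qed
qed

end

theorem proposition4p6:
  fixes A :: "real \<Rightarrow> complex^'n^'n" and A0 :: "complex^'n^'n"
  assumes init: "A 0 = A0"
    and ode: "\<And>t. t \<ge> 0 \<Longrightarrow>
      (A has_vector_derivative (A t ** commutator (A t) (conj_transpose (A t)))) (at t within {0..})"
  shows "omega_limit A = {0} \<longleftrightarrow> nilpotent_matrix A0"
proof -
  interpret flow A using ode by unfold_locales
  show ?thesis
  proof
    assume om: "omega_limit A = {0}"
    then have "0 \<in> omega_limit A" by simp
    then obtain tt :: "nat \<Rightarrow> real" where tt: "filterlim tt at_top sequentially"
      and lim: "(\<lambda>k. A (tt k)) \<longlonglongrightarrow> 0"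
      unfolding omega_limit_def by auto
    have ev: "eventually (\<lambda>j. tt j \<ge> 0) sequentially"
      using tt by (simp add: filterlim_at_top)
    have "trace (mat_pow A0 k) = 0" if k: "k \<ge> 1" for k
    proof -
      have ic: "isCont (\<lambda>X::complex^'n^'n. trace (mat_pow X k)) 0"
        using cont_trace_pow[of UNIV k] continuous_on_eq_continuous_at[OF open_UNIV] by blast
      have l1: "(\<lambda>j. trace (mat_pow (A (tt j)) k)) \<longlonglongrightarrow> trace (mat_pow (0::complex^'n^'n) k)"
        using isCont_tendsto_compose[OF ic lim] by simp
      have z: "mat_pow (0::complex^'n^'n) k = 0"
        using k by (cases k) (simp_all add: mat_pow_Suc)
      have "eventually (\<lambda>j. trace (mat_pow (A (tt j)) k) = trace (mat_pow A0 k)) sequentially"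
        using ev by eventually_elim (use trace_const init in auto)
      then have "(\<lambda>j. trace (mat_pow (A (tt j)) k)) \<longlonglongrightarrow> trace (mat_pow A0 k)"
        by (rule tendsto_eventually)
      from this l1 have "trace (mat_pow A0 k) = trace (mat_pow (0::complex^'n^'n) k)" by (rule LIMSEQ_unique)
      then show ?thesis using z by simp
    qed
    then show "nilpotent_matrix A0" using nilp_iff_traces by blast
  next
    assume "nilpotent_matrix A0"
    then have lim: "(A \<longlongrightarrow> 0) at_top" using tends_zero init by simp
    show "omega_limit A = {0}"
    proof
      show "omega_limit A \<subseteq> {0}"
      proof
        fix L assume "L \<in> omega_limit A"
        then obtain tt :: "nat \<Rightarrow> real" where tt: "filterlim tt at_top sequentially"
          and limL: "(\<lambda>k. A (tt k)) \<longlonglongrightarrow> L"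
          unfolding omega_limit_def by auto
        have "(\<lambda>k. A (tt k)) \<longlonglongrightarrow> 0" by (rule filterlim_compose[OF lim tt])
        with limL have "L = 0" by (rule LIMSEQ_unique)
        then show "L \<in> {0}" by simp
      qed
      show "{0} \<subseteq> omega_limit A"
        unfolding omega_limit_def
        using filterlim_compose[OF lim filterlim_real_sequentially] filterlim_real_sequentially
        by auto
    qed
  qed
qed

end
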